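(* For every real Banach space $X$ with $\dim X\ge 2$ and all $\alpha,\beta>0$, $$DW(X,\alpha,\beta)\ge(\alpha+\beta)\max\{2\rho_X'(0),1\}.$$
   Context: For $\alpha,\beta>0$, $$DW(X,\alpha,\beta)=\sup\left\{\frac{\alpha\|x\|+\beta\|y\|}{\|x-y\|}\left\|\frac{x}{\|x\|}-\frac{y}{\|y\|}\right\|: x,y\in X\setminus\{0\},\ x\neq y\right\}.$$ The Lindenstrauss modulus of smoothness is $\rho_X(t)=\sup\{\tfrac12(\|x+ty\|+\|x-ty\|)-1: x,y\in B_X\}$ for $t\ge0$ ($B_X$ the closed unit ball), and $\rho_X'(0)=\lim_{t\to0^+}\rho_X(t)/t$ is the characteristic of smoothness. *)

theory Defs
  imports "HOL-Analysis.Analysis"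
begin

text \<open>The constant DW(X,alpha,beta), valued in the extended reals (the supremum may be infinite).\<close>
definition DW :: "'a::real_normed_vector itself \<Rightarrow> real \<Rightarrow> real \<Rightarrow> ereal" where
  "DW _ \<alpha> \<beta> = Sup {ereal ((\<alpha> * norm x + \<beta> * norm y) / norm (x - y)
                          * norm (x /\<^sub>R norm x - y /\<^sub>R norm y))
                     | x y :: 'a. x \<noteq> 0 \<and> y \<noteq> 0 \<and> x \<noteq> y}"

definition rho_mod :: "'a::real_normed_vector itself \<Rightarrow> real \<Rightarrow> real" where
  "rho_mod _ t = Sup {(norm (x + t *\<^sub>R y) + norm (x - t *\<^sub>R y)) / 2 - 1
                     | x y :: 'a. norm x \<le> 1 \<and> norm y \<le> 1}"

definition rho_char :: "'a::real_normed_vector itself \<Rightarrow> real" where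
  "rho_char X = Lim (at_right 0) (\<lambda>t. rho_mod X t / t)"

end

theory Submission
  imports Defs
begin

lemma rho_bdd:
  assumes "t \<ge> 0"
  shows "bdd_above {(norm (x + t *\<^sub>R y) + norm (x - t *\<^sub>R y)) / 2 - 1
                     | x y :: 'a::real_normed_vector. norm x \<le> 1 \<and> norm y \<le> 1}"
proof (rule bdd_aboveI[where M = t], clarify)
  fix x y :: 'a assume h: "norm x \<le> 1" "norm y \<le> 1"
  have "norm (x + t *\<^sub>R y) \<le> norm x + t * norm y"
    using norm_triangle_ineq[of x "t *\<^sub>R y"] assms by simp
  moreover have "norm (x - t *\<^sub>R y) \<le> norm x + t * norm y"
    using norm_triangle_ineq4[of x "t *\<^sub>R y"] assms by simp
  moreover have "t * norm y \<le> t" using h assms by (simp add: mult_left_le)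
  ultimately have "norm (x + t *\<^sub>R y) + norm (x - t *\<^sub>R y) \<le> 2 + 2 * t"
    using h by linarith
  thus "(norm (x + t *\<^sub>R y) + norm (x - t *\<^sub>R y)) / 2 - 1 \<le> t"
    by (simp add: field_simps)
qed

lemma phi_le_rho:
  fixes x y :: "'a::real_normed_vector"
  assumes "norm x \<le> 1" "norm y \<le> 1" "t \<ge> 0"
  shows "(norm (x + t *\<^sub>R y) + norm (x - t *\<^sub>R y)) / 2 - 1 \<le> rho_mod TYPE('a) t"
  unfolding rho_mod_def
  by (rule cSup_upper) (use assms rho_bdd[OF assms(3)] in auto)

lemma rho_least:
  assumes "\<And>x y :: 'a::real_normed_vector. norm x \<le> 1 \<Longrightarrow> norm y \<le> 1 \<Longrightarrow>
       (norm (x + t *\<^sub>R y) + norm (x - t *\<^sub>R y)) / 2 - 1 \<le> M"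
  shows "rho_mod TYPE('a) t \<le> M"
  unfolding rho_mod_def
proof (rule cSup_least)
  show "{(norm (x + t *\<^sub>R y) + norm (x - t *\<^sub>R y)) / 2 - 1
                     | x y :: 'a. norm x \<le> 1 \<and> norm y \<le> 1} \<noteq> {}"
  proof -
    have "norm (0::'a) \<le> 1" by simp
    thus ?thesis by blast
  qed
qed (use assms in auto)

lemma rho_mono:
  assumes "0 < s" "s \<le> t"
  shows "rho_mod TYPE('a::real_normed_vector) s / s \<le> rho_mod TYPE('a) t / t"
proof -
  have t0: "t > 0" using assms by simp
  define c where "c = s / t"
  have c0: "0 < c" "c \<le> 1" using assms by (auto simp: c_def)
  have cs: "c * t = s" using t0 by (simp add: c_def)
  have "rho_mod TYPE('a) s \<le> c * rho_mod TYPE('a) t"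
  proof (rule rho_least)
    fix x y :: 'a assume h: "norm x \<le> 1" "norm y \<le> 1"
    have e1: "x + s *\<^sub>R y = (1 - c) *\<^sub>R x + c *\<^sub>R (x + t *\<^sub>R y)"
      using cs by (simp add: algebra_simps)
    have e2: "x - s *\<^sub>R y = (1 - c) *\<^sub>R x + c *\<^sub>R (x - t *\<^sub>R y)"
      using cs by (simp add: algebra_simps)
    have n1: "norm (x + s *\<^sub>R y) \<le> (1 - c) * norm x + c * norm (x + t *\<^sub>R y)"
      unfolding e1 using norm_triangle_ineq[of "(1 - c) *\<^sub>R x" "c *\<^sub>R (x + t *\<^sub>R y)"] c0
      by simp
    have n2: "norm (x - s *\<^sub>R y) \<le> (1 - c) * norm x + c * norm (x - t *\<^sub>R y)"
      unfolding e2 using norm_triangle_ineq[of "(1 - c) *\<^sub>R x" "c *\<^sub>R (x - t *\<^sub>R y)"] c0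
      by simp
    have p: "(norm (x + t *\<^sub>R y) + norm (x - t *\<^sub>R y)) / 2 - 1 \<le> rho_mod TYPE('a) t"
      using phi_le_rho[OF h] t0 by simp
    have "(1 - c) * norm x \<le> (1 - c)" using c0 h by (simp add: mult_left_le)
    hence "(norm (x + s *\<^sub>R y) + norm (x - s *\<^sub>R y)) / 2 - 1
        \<le> c * ((norm (x + t *\<^sub>R y) + norm (x - t *\<^sub>R y)) / 2 - 1)"
    proof -
      have "c * ((norm (x + t *\<^sub>R y) + norm (x - t *\<^sub>R y)) / 2 - 1)
         = (c * norm (x + t *\<^sub>R y) + c * norm (x - t *\<^sub>R y)) / 2 - c"
        by (simp add: algebra_simps)
      with n1 n2 \<open>(1 - c) * norm x \<le> (1 - c)\<close> show ?thesis by (simp add: field_simps)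
    qed
    also have "\<dots> \<le> c * rho_mod TYPE('a) t" using p c0 by simp
    finally show "(norm (x + s *\<^sub>R y) + norm (x - s *\<^sub>R y)) / 2 - 1 \<le> c * rho_mod TYPE('a) t" .
  qed
  thus ?thesis using assms t0 by (simp add: c_def divide_simps mult.commute)
qed

lemma DW_upper:
  fixes x y :: "'a::real_normed_vector"
  assumes "x \<noteq> 0" "y \<noteq> 0" "x \<noteq> y"
  shows "ereal ((\<alpha> * norm x + \<beta> * norm y) / norm (x - y)
                          * norm (x /\<^sub>R norm x - y /\<^sub>R norm y)) \<le> DW TYPE('a) \<alpha> \<beta>"
  unfolding DW_def by (rule Sup_upper) (use assms in blast)


lemma key:
  fixes x y :: "'a::real_normed_vector"
  assumes hx: "norm x \<le> 1" and hy: "norm y \<le> 1" and t0: "0 < t" and t1: "t < 1/2"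
    and al: "\<alpha> > 0" and be: "\<beta> > 0"
    and php: "(norm (x + t *\<^sub>R y) + norm (x - t *\<^sub>R y)) / 2 - 1 > 0"
  shows "ereal ((\<alpha> + \<beta> * (1 - t)) * (2 * ((norm (x + t *\<^sub>R y) + norm (x - t *\<^sub>R y)) / 2 - 1)) / t)
          \<le> DW TYPE('a) \<alpha> \<beta>"
proof -
  define u where "u = x + t *\<^sub>R y"
  define w where "w = x - t *\<^sub>R y"
  define a where "a = norm u"
  define b where "b = norm w"
  define r where "r = norm x"
  define \<phi> where "\<phi> = (a + b) / 2 - 1"
  have php': "\<phi> > 0" using php by (simp add: \<phi>_def a_def b_def u_def w_def)
  have ty: "norm (t *\<^sub>R y) \<le> t" using hy t0 by (simp add: mult_left_le)
  have a1: "a \<le> r + t" using norm_triangle_ineq[of x "t *\<^sub>R y"] ty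
    by (simp add: a_def u_def r_def)
  have a2: "r \<le> a + t" using norm_triangle_ineq4[of "x + t *\<^sub>R y" "t *\<^sub>R y"] ty
    by (simp add: a_def u_def r_def)
  have b1: "b \<le> r + t" using norm_triangle_ineq4[of x "t *\<^sub>R y"] ty
    by (simp add: b_def w_def r_def)
  have ab: "a + b = 2 + 2 * \<phi>" by (simp add: \<phi>_def)
  have r1: "r > 1 - t" using a1 b1 ab php' by linarith
  have r2: "r \<le> 1" using hx by (simp add: r_def)
  have rpos: "r > 0" "t < r" using r1 t1 by auto
  have apos: "a > 0" using a2 r1 t1 by linarith
  have x0: "x \<noteq> 0" using rpos by (auto simp: r_def)
  have u0: "u \<noteq> 0" using apos by (auto simp: a_def)
  have y0: "y \<noteq> 0"
  proof
    assume "y = 0"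
    hence "a = r" "b = r" by (simp_all add: a_def b_def u_def w_def r_def)
    thus False using php' r2 unfolding \<phi>_def by (simp add: field_simps)
  qed
  have ux: "u - x = t *\<^sub>R y" by (simp add: u_def)
  have ux0: "u \<noteq> x" using ux y0 t0 by auto
  have dpos: "norm (u - x) > 0" using ux0 by simp
  have dle: "norm (u - x) \<le> t" using ux ty by simp
  have "a *\<^sub>R (u /\<^sub>R a - x /\<^sub>R r) = (2 - a / r) *\<^sub>R x - w"
  proof -
    have "a *\<^sub>R (u /\<^sub>R a - x /\<^sub>R r) = u - (a / r) *\<^sub>R x"
      using apos by (simp add: scaleR_diff_right divide_inverse)
    also have "\<dots> = (2 - a / r) *\<^sub>R x - w"
      by (simp add: u_def w_def scaleR_diff_left scaleR_2)
    finally show ?thesis .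
  qed
  hence "a * norm (u /\<^sub>R a - x /\<^sub>R r) = norm ((2 - a / r) *\<^sub>R x - w)"
    using apos by (metis abs_of_pos norm_scaleR)
  also have "\<dots> \<ge> norm w - norm ((2 - a / r) *\<^sub>R x)"
    using norm_triangle_ineq3[of w "(2 - a / r) *\<^sub>R x"] norm_minus_commute[of w]
    by (metis abs_ge_self order_trans norm_triangle_ineq2)
  moreover have "norm ((2 - a / r) *\<^sub>R x) = 2 * r - a"
  proof -
    have "a / r \<le> 2" using a1 rpos by (simp add: field_simps)
    hence "norm ((2 - a / r) *\<^sub>R x) = (2 - a / r) * r" by (simp add: r_def)
    thus ?thesis using rpos by (simp add: field_simps)
  qed
  ultimately have "a * norm (u /\<^sub>R a - x /\<^sub>R r) \<ge> a + b - 2 * r"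
    by (simp add: b_def)
  moreover have "a + b - 2 * r \<ge> 2 * \<phi>" using ab r2 by linarith
  ultimately have M: "norm (u /\<^sub>R a - x /\<^sub>R r) \<ge> 2 * \<phi> / a"
    using apos by (simp add: field_simps)
  define N where "N = \<alpha> * a + \<beta> * r"
  have Npos: "N > 0" using al be apos rpos by (simp add: N_def add_pos_pos)
  have "N / t \<le> N / norm (u - x)" using dpos dle Npos by (simp add: frac_le)
  hence "N / t * (2 * \<phi> / a) \<le> N / norm (u - x) * norm (u /\<^sub>R a - x /\<^sub>R r)"
    using M php' apos Npos t0 by (intro mult_mono) auto
  moreover have "(\<alpha> + \<beta> * (1 - t)) * (2 * \<phi>) / t \<le> N / t * (2 * \<phi> / a)"
  proof -
    have "r \<ge> (1 - t) * a"
    proof -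
      have "(1 - t) * a \<le> (1 - t) * (r + t)" using a1 t1 by (simp add: mult_left_mono)
      also have "\<dots> = r - t * (r + t - 1)" by (simp add: algebra_simps)
      also have "\<dots> \<le> r" using r1 t0 by simp
      finally show ?thesis .
    qed
    hence "\<beta> * ((1 - t) * a) \<le> \<beta> * r" using be by (simp add: mult_left_mono)
    hence "(\<alpha> + \<beta> * (1 - t)) * a \<le> N" by (simp add: N_def algebra_simps)
    hence "\<alpha> + \<beta> * (1 - t) \<le> N / a" using apos
      by (simp add: pos_le_divide_eq)
    hence "(\<alpha> + \<beta> * (1 - t)) * (2 * \<phi> / t) \<le> N / a * (2 * \<phi> / t)"
      using php' t0 by (intro mult_right_mono) auto
    thus ?thesis by (simp add: field_simps)
  qed
  ultimately have "(\<alpha> + \<beta> * (1 - t)) * (2 * \<phi>) / t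
      \<le> (\<alpha> * norm u + \<beta> * norm x) / norm (u - x) * norm (u /\<^sub>R norm u - x /\<^sub>R norm x)"
    by (simp add: N_def a_def r_def)
  hence "ereal ((\<alpha> + \<beta> * (1 - t)) * (2 * \<phi>) / t) \<le> DW TYPE('a) \<alpha> \<beta>"
    using DW_upper[OF u0 x0 ux0, of \<alpha> \<beta>] order_trans ereal_less_eq(3) by blast
  thus ?thesis by (simp add: \<phi>_def a_def b_def u_def w_def)
qed


lemma mono_lim:
  fixes f :: "real \<Rightarrow> real"
  assumes mono: "\<And>s t. 0 < s \<Longrightarrow> s \<le> t \<Longrightarrow> f s \<le> f t"
    and nn: "\<And>t. 0 < t \<Longrightarrow> 0 \<le> f t"
  shows "(f \<longlongrightarrow> Inf (f ` {0<..})) (at_right 0)"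
proof (rule order_tendstoI)
  have bdd: "bdd_below (f ` {0<..})" using nn by (auto intro: bdd_belowI[where m=0])
  have ne: "f ` {0<..} \<noteq> {}" by (simp add: gt_ex)
  fix a assume "a < Inf (f ` {0<..})"
  moreover have "\<forall>x>0. Inf (f ` {0<..}) \<le> f x" using bdd by (auto intro: cInf_lower)
  ultimately have "\<forall>x>0. a < f x" by force
  thus "eventually (\<lambda>x. a < f x) (at_right 0)"
    unfolding eventually_at_right[OF zero_less_one] using zero_less_one by blast
next
  have ne: "f ` {0<..} \<noteq> {}" by (simp add: gt_ex)
  fix a assume "Inf (f ` {0<..}) < a"
  then obtain v where v: "v \<in> f ` {0<..}" "v < a" using cInf_lessD[OF ne] by blast
  then obtain s where s: "s > 0" "f s < a" by auto
  have "\<forall>y>0. y < s \<longrightarrow> f y < a" using mono s by (meson le_less_trans less_imp_le)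
  thus "eventually (\<lambda>x. f x < a) (at_right 0)"
    unfolding eventually_at_right[OF s(1)] using s(1) by blast
qed

theorem theorem4:
  fixes \<alpha> \<beta> :: real
  assumes dim2: "\<exists>u v :: 'a::banach. u \<noteq> v \<and> independent {u, v}"
    and "\<alpha> > 0" and "\<beta> > 0"
  shows "DW TYPE('a) \<alpha> \<beta> \<ge> ereal ((\<alpha> + \<beta>) * max (2 * rho_char TYPE('a)) 1)"
proof -
  note al = \<open>\<alpha> > 0\<close> and be = \<open>\<beta> > 0\<close>
  obtain u v :: 'a where "independent {u, v}" using dim2 by blast
  hence u0: "u \<noteq> 0" using dependent_zero by blast
  define e where "e = u /\<^sub>R norm u"
  have ne: "norm e = 1" using u0 by (simp add: e_def)
  hence e0: "e \<noteq> 0" by auto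
  define f where "f = (\<lambda>t. rho_mod TYPE('a) t / t)"
  have fmono: "\<And>s t. 0 < s \<Longrightarrow> s \<le> t \<Longrightarrow> f s \<le> f t"
    unfolding f_def by (rule rho_mono)
  have rnn: "\<And>t. 0 \<le> t \<Longrightarrow> 0 \<le> rho_mod TYPE('a) t"
    using phi_le_rho[of e 0] ne by simp
  have fnn: "\<And>t. 0 < t \<Longrightarrow> 0 \<le> f t" unfolding f_def using rnn by simp
  define L where "L = Inf (f ` {0<..})"
  have lim: "(f \<longlongrightarrow> L) (at_right 0)" unfolding L_def by (rule mono_lim[OF fmono fnn])
  have LL: "rho_char TYPE('a) = L"
    unfolding rho_char_def f_def[symmetric] by (rule tendsto_Lim[OF _ lim]) simp
  have bdd: "bdd_below (f ` {0<..})" using fnn by (auto intro: bdd_belowI[where m=0])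
  have fL: "\<And>t. 0 < t \<Longrightarrow> L \<le> f t" unfolding L_def using bdd by (auto intro: cInf_lower)
  have L0: "0 \<le> L" unfolding L_def
    by (rule cInf_greatest) (use fnn gt_ex in auto)
  have DW1: "ereal (\<alpha> + \<beta>) \<le> DW TYPE('a) \<alpha> \<beta>"
  proof -
    have "e \<noteq> - e"
    proof
      assume h: "e = - e"
      have "2 *\<^sub>R e = e + e" by (simp add: scaleR_2)
      also have "\<dots> = e + - e" using h by simp
      finally have "2 *\<^sub>R e = 0" by simp
      thus False using e0 by simp
    qed
    hence "ereal ((\<alpha> * norm e + \<beta> * norm (-e)) / norm (e - - e)
                          * norm (e /\<^sub>R norm e - (-e) /\<^sub>R norm (-e))) \<le> DW TYPE('a) \<alpha> \<beta>"
      using DW_upper[of e "-e"] e0 by simp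
    moreover have "e - - e = 2 *\<^sub>R e" by (simp add: scaleR_2)
    ultimately show ?thesis using ne e0 by simp
  qed
  then obtain D where D: "DW TYPE('a) \<alpha> \<beta> = ereal D \<or> DW TYPE('a) \<alpha> \<beta> = \<infinity>"
    by (cases "DW TYPE('a) \<alpha> \<beta>") auto
  show ?thesis
  proof (cases "DW TYPE('a) \<alpha> \<beta> = \<infinity>")
    case True thus ?thesis by simp
  next
    case False
    hence DD: "DW TYPE('a) \<alpha> \<beta> = ereal D" using D by simp
    have D1: "\<alpha> + \<beta> \<le> D" using DW1 DD by simp
    have D2: "(\<alpha> + \<beta> * (1 - t)) * (2 * L) \<le> D" if t: "0 < t" "t < 1/2" for t
    proof -
      define k where "k = (\<alpha> + \<beta> * (1 - t)) * 2 / t"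
      have kpos: "k > 0" using al be t by (simp add: k_def add_pos_nonneg)
      have "rho_mod TYPE('a) t \<le> D / k"
      proof (rule rho_least)
        fix x y :: 'a assume h: "norm x \<le> 1" "norm y \<le> 1"
        define \<phi> where "\<phi> = (norm (x + t *\<^sub>R y) + norm (x - t *\<^sub>R y)) / 2 - 1"
        show "(norm (x + t *\<^sub>R y) + norm (x - t *\<^sub>R y)) / 2 - 1 \<le> D / k"
        proof (cases "\<phi> > 0")
          case True
          have "ereal ((\<alpha> + \<beta> * (1 - t)) * (2 * \<phi>) / t) \<le> ereal D"
            using key[OF h t al be] True DD by (simp add: \<phi>_def)
          hence "k * \<phi> \<le> D" by (simp add: k_def field_simps)
          hence "\<phi> \<le> D / k" using kpos by (simp add: pos_le_divide_eq mult.commute)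
          thus ?thesis by (simp add: \<phi>_def)
        next
          case False
          moreover have "D / k \<ge> 0" using D1 al be kpos by simp
          ultimately have "\<phi> \<le> D / k" by simp
          thus ?thesis by (simp add: \<phi>_def)
        qed
      qed
      hence "k * rho_mod TYPE('a) t \<le> D" using kpos by (simp add: field_simps)
      hence "(\<alpha> + \<beta> * (1 - t)) * 2 * f t \<le> D" by (simp add: k_def f_def field_simps)
      moreover have "(\<alpha> + \<beta> * (1 - t)) * 2 * L \<le> (\<alpha> + \<beta> * (1 - t)) * 2 * f t"
        using fL[OF t(1)] al be t by (intro mult_left_mono) auto
      moreover have "(\<alpha> + \<beta> * (1 - t)) * (2 * L) = (\<alpha> + \<beta> * (1 - t)) * 2 * L"
        by (simp add: mult.assoc)
      ultimately show ?thesis by linarith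
    qed
    have "(\<alpha> + \<beta>) * (2 * L) \<le> D"
    proof (rule ccontr)
      assume "\<not> ?thesis"
      hence gap: "D < (\<alpha> + \<beta>) * (2 * L)" by simp
      hence Lp: "L > 0" using D1 L0 al be by (cases "L = 0") auto
      define t where "t = min (1/4) (((\<alpha> + \<beta>) * (2 * L) - D) / (4 * \<beta> * L))"
      have t0: "0 < t" "t < 1/2" using gap Lp be by (auto simp: t_def)
      have "t * (4 * \<beta> * L) \<le> (\<alpha> + \<beta>) * (2 * L) - D"
        using Lp be unfolding t_def by (auto simp: min_def field_simps split: if_splits)
      hence "(\<alpha> + \<beta> * (1 - t)) * (2 * L) > D" using Lp be gap t0
        by (simp add: algebra_simps)
      thus False using D2[OF t0] by simp
    qed
    thus ?thesis using D1 DD LL by (simp add: max_def)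
  qed
qed

end
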